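(* Let $n\ge1$ and let $x_1,\dots,x_n$ and $y_1,\dots,y_n$ be Boolean values. Define Boolean values $a_1,\dots,a_{n-1}$ and $d_1,\dots,d_n$ inductively by $a_1\Leftrightarrow(x_1\ge y_1)$; $a_{i+1}\Leftrightarrow(a_i\wedge x_{i+1}\ge y_{i+1})$ for $1\le i\le n-2$; $d_1\Leftrightarrow(y_1\ge x_1)$; $d_{i+1}\Leftrightarrow(d_i\wedge(\bar a_i\vee y_{i+1}\ge x_{i+1}))$ for $1\le i\le n-1$. Then $d_n$ holds if and only if $(x_1,\dots,x_n)\le_{\mathrm{lex}}(y_1,\dots,y_n)$.
   Context: Boolean values are $0$ (false) and $1$ (true), with $0<1$; $\bar a=1-a$. The lexicographic order on $\{0,1\}^n$: $(x_1,\dots,x_n)\le_{\mathrm{lex}}(y_1,\dots,y_n)$ iff the tuples are equal or, at the first index $i$ where they differ, $x_i<y_i$ (equivalently $\sum_{i=1}^n 2^{n-i}x_i\le\sum_{i=1}^n 2^{n-i}y_i$). *)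

theory Defs
  imports Main
begin

text \<open>Boolean tuples (x_1,...,x_n) are functions nat => bool read on indices 1..n;
  bool is ordered with False < True.\<close>

definition lex_le :: "nat \<Rightarrow> (nat \<Rightarrow> bool) \<Rightarrow> (nat \<Rightarrow> bool) \<Rightarrow> bool" where
  "lex_le n x y \<longleftrightarrow>
     (\<forall>i\<in>{1..n}. x i = y i) \<or>
     (\<exists>i\<in>{1..n}. (\<forall>j\<in>{1..<i}. x j = y j) \<and> x i < y i)"

end

theory Submission
  imports Defs
begin

lemma lex_step:
  assumes "i \<ge> 1"
  shows "lex_le (Suc i) x y = (lex_le i x y \<and> (\<not>(\<forall>j\<in>{1..i}. y j \<le> x j) \<or> x (Suc i) \<le> y (Suc i)))"
proof
  assume L: "lex_le (Suc i) x y"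
  show "lex_le i x y \<and> (\<not>(\<forall>j\<in>{1..i}. y j \<le> x j) \<or> x (Suc i) \<le> y (Suc i))"
  proof (cases "\<forall>k\<in>{1..Suc i}. x k = y k")
    case True
    then show ?thesis unfolding lex_le_def by auto
  next
    case False
    with L obtain k where k: "k \<in> {1..Suc i}" "\<forall>j\<in>{1..<k}. x j = y j" "x k < y k"
      unfolding lex_le_def by blast
    show ?thesis
    proof (cases "k = Suc i")
      case True
      then show ?thesis using k unfolding lex_le_def
        by (auto simp: less_bool_def le_bool_def less_Suc_eq_le)
    next
      case False
      then have "k \<in> {1..i}" using k by auto
      then show ?thesis using k unfolding lex_le_def
        by (metis less_bool_def le_bool_def)
    qed
  qed
next
  assume R: "lex_le i x y \<and> (\<not>(\<forall>j\<in>{1..i}. y j \<le> x j) \<or> x (Suc i) \<le> y (Suc i))"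
  then have L: "lex_le i x y" by blast
  show "lex_le (Suc i) x y"
  proof (cases "\<forall>k\<in>{1..i}. x k = y k")
    case True
    then have "x (Suc i) \<le> y (Suc i)" using R by auto
    then show ?thesis
    proof (cases "x (Suc i) = y (Suc i)")
      case True
      then show ?thesis using \<open>\<forall>k\<in>{1..i}. x k = y k\<close> unfolding lex_le_def
        by (auto simp: le_Suc_eq)
    next
      case False
      then have "x (Suc i) < y (Suc i)" using \<open>x (Suc i) \<le> y (Suc i)\<close> by auto
      moreover have "\<forall>j\<in>{1..<Suc i}. x j = y j" using \<open>\<forall>k\<in>{1..i}. x k = y k\<close> by auto
      ultimately show ?thesis unfolding lex_le_def by (intro disjI2 bexI[where x="Suc i"]) auto
    qed
  next
    case False
    with L obtain k where k: "k \<in> {1..i}" "\<forall>j\<in>{1..<k}. x j = y j" "x k < y k"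
      unfolding lex_le_def by blast
    then show ?thesis unfolding lex_le_def by (intro disjI2 bexI[where x=k]) auto
  qed
qed

theorem lemma11:
  fixes n :: nat and x y a d :: "nat \<Rightarrow> bool"
  assumes "n \<ge> 1"
    and "a 1 = (x 1 \<ge> y 1)"
    and "\<forall>i. 1 \<le> i \<and> i \<le> n - 2 \<longrightarrow> a (i + 1) = (a i \<and> x (i + 1) \<ge> y (i + 1))"
    and "d 1 = (y 1 \<ge> x 1)"
    and "\<forall>i. 1 \<le> i \<and> i \<le> n - 1 \<longrightarrow> d (i + 1) = (d i \<and> (\<not> a i \<or> y (i + 1) \<ge> x (i + 1)))"
  shows "d n \<longleftrightarrow> lex_le n x y"
proof -
  have A: "1 \<le> i \<Longrightarrow> i \<le> n - 1 \<Longrightarrow> a i = (\<forall>j\<in>{1..i}. y j \<le> x j)" for i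
  proof (induction i rule: nat_induct_at_least)
    case base then show ?case using assms(2) by auto
  next
    case (Suc m)
    then have "a (m+1) = (a m \<and> x (m + 1) \<ge> y (m + 1))" using assms(3) by auto
    then show ?case using Suc by (auto simp: le_Suc_eq)
  qed
  have D: "1 \<le> i \<Longrightarrow> i \<le> n \<Longrightarrow> d i = lex_le i x y" for i
  proof (induction i rule: nat_induct_at_least)
    case base then show ?case using assms(4) unfolding lex_le_def
      by (auto simp: less_bool_def le_bool_def)
  next
    case (Suc m)
    then have "d (m+1) = (d m \<and> (\<not> a m \<or> y (m + 1) \<ge> x (m + 1)))" using assms(5) by auto
    then show ?case using Suc A[of m] lex_step[of m x y] by auto
  qed
  show ?thesis using D[of n] assms(1) by auto
qed

end
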